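(* Consider a transient MDP with a sink state as in the context. For each $\pi\in\Pi_{\mathrm{SD}}$ and $t\in\mathbb N$: \[ \lim_{\beta\to0}g_t(\pi,\beta)=g_t(\pi,0),\quad \lim_{\beta\to0}g^\star_t(\beta)=g^\star_t(0),\quad \lim_{\beta\to0}g_\infty(\pi,\beta)=g_\infty(\pi,0),\quad \lim_{\beta\to0}g^\star_\infty(\beta)=g^\star_\infty(0), \] where $\beta\to0$ from above.
   Context: MDP: states $\mathcal S=\{1,\dots,S\}$ plus sink state $e$ ($p(e,a,e)=1$, $r(e,a,e)=0$); finite actions; transitions $p(s,a,s')$, real rewards $r(s,a,s')$ of arbitrary sign; initial distribution $\mu$ on $\mathcal S$ with $\mu>0$. Transience: for every stationary deterministic policy $\pi$, $\sum_{t\ge0}\mathbb P^{\pi,s}[\tilde s_t=s']<\infty$ for all $s,s'\in\mathcal S$. $\Pi_{\mathrm{SD}}$ stationary deterministic, $\Pi_{\mathrm{HR}}$ history-dependent randomized policies. $\mathrm{ERM}_\beta[\tilde x]=-\beta^{-1}\log\mathbb E e^{-\beta\tilde x}$ for $\beta>0$ and $\mathrm{ERM}_0=\mathbb E$. $g_t(\pi,\beta)=\mathrm{ERM}^{\pi,\mu}_\beta[\sum_{k=0}^t r(\tilde s_k,\tilde a_k,\tilde s_{k+1})]$, $g^\star_t(\beta)=\sup_{\pi\in\Pi_{\mathrm{HR}}}g_t(\pi,\beta)$, $g_\infty(\pi,\beta)=\liminf_t g_t(\pi,\beta)$, $g^\star_\infty(\beta)=\liminf_t g^\star_t(\beta)$.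 *)

theory Defs
  imports "HOL-Probability.Probability"
begin

text \<open>States: a finite type 's containing the sink state e
 (the non-sink states play the role of {1..S}); actions: a finite type 'a.
 Transition kernel p s a :: 's pmf (so p(s,a,s') = pmf (p s a) s'),
 rewards r s a s' :: real, initial distribution mu :: 's pmf.
 A history-dependent randomized policy maps the history
 [(s_0,a_0),...,(s_{k-1},a_{k-1})] and the current state s_k to a
 distribution over actions.\<close>

type_synonym ('s, 'a) hr_policy = "('s \<times> 'a) list \<Rightarrow> 's \<Rightarrow> 'a pmf"

definition sd_policy :: "('s \<Rightarrow> 'a) \<Rightarrow> ('s, 'a) hr_policy" where
  "sd_policy d = (\<lambda>h s. return_pmf (d s))"

text \<open>traj p mu pol n: joint law of ([(s_0,a_0),...,(s_{n-1},a_{n-1})], s_n).\<close>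
fun traj :: "('s \<Rightarrow> 'a \<Rightarrow> 's pmf) \<Rightarrow> 's pmf \<Rightarrow> ('s, 'a) hr_policy \<Rightarrow> nat
              \<Rightarrow> (('s \<times> 'a) list \<times> 's) pmf" where
  "traj p mu pol 0 = map_pmf (\<lambda>s. ([], s)) mu"
| "traj p mu pol (Suc n) = bind_pmf (traj p mu pol n)
     (\<lambda>(h, s). bind_pmf (pol h s) (\<lambda>a. map_pmf (\<lambda>s'. (h @ [(s, a)], s')) (p s a)))"

fun ret :: "('s \<Rightarrow> 'a \<Rightarrow> 's \<Rightarrow> real) \<Rightarrow> ('s \<times> 'a) list \<Rightarrow> 's \<Rightarrow> real" where
  "ret r [] s' = 0"
| "ret r [(s, a)] s' = r s a s'"
| "ret r ((s, a) # (s2, a2) # h) s' = r s a s2 + ret r ((s2, a2) # h) s'"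

definition ERM :: "real \<Rightarrow> real pmf \<Rightarrow> real" where
  "ERM \<beta> X = (if \<beta> = 0 then measure_pmf.expectation X (\<lambda>x. x)
              else - (1 / \<beta>) * ln (measure_pmf.expectation X (\<lambda>x. exp (- \<beta> * x))))"

text \<open>g_t(pol,beta) = ERM_beta[ sum_{k=0}^t r(s_k,a_k,s_{k+1}) ].\<close>
definition g :: "('s \<Rightarrow> 'a \<Rightarrow> 's pmf) \<Rightarrow> ('s \<Rightarrow> 'a \<Rightarrow> 's \<Rightarrow> real) \<Rightarrow> 's pmf
                 \<Rightarrow> nat \<Rightarrow> ('s, 'a) hr_policy \<Rightarrow> real \<Rightarrow> real" where
  "g p r mu t pol \<beta> = ERM \<beta> (map_pmf (\<lambda>(h, s). ret r h s) (traj p mu pol (Suc t)))"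

definition g_star :: "('s \<Rightarrow> 'a \<Rightarrow> 's pmf) \<Rightarrow> ('s \<Rightarrow> 'a \<Rightarrow> 's \<Rightarrow> real) \<Rightarrow> 's pmf
                 \<Rightarrow> nat \<Rightarrow> real \<Rightarrow> real" where
  "g_star p r mu t \<beta> = (SUP pol \<in> (UNIV :: ('s, 'a) hr_policy set). g p r mu t pol \<beta>)"

definition g_inf :: "('s \<Rightarrow> 'a \<Rightarrow> 's pmf) \<Rightarrow> ('s \<Rightarrow> 'a \<Rightarrow> 's \<Rightarrow> real) \<Rightarrow> 's pmf
                 \<Rightarrow> ('s, 'a) hr_policy \<Rightarrow> real \<Rightarrow> ereal" where
  "g_inf p r mu pol \<beta> = liminf (\<lambda>t. ereal (g p r mu t pol \<beta>))"

definition g_star_inf :: "('s \<Rightarrow> 'a \<Rightarrow> 's pmf) \<Rightarrow> ('s \<Rightarrow> 'a \<Rightarrow> 's \<Rightarrow> real) \<Rightarrow> 's pmf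
                 \<Rightarrow> real \<Rightarrow> ereal" where
  "g_star_inf p r mu \<beta> = liminf (\<lambda>t. ereal (g_star p r mu t \<beta>))"

end

theory Submission
  imports Defs
begin


lemma int_fin:
  fixes f :: "'b \<Rightarrow> real"
  assumes "finite (set_pmf M)"
  shows "measure_pmf.expectation M f = (\<Sum>x\<in>set_pmf M. pmf M x * f x)"
  by (subst integral_measure_pmf_real[where A="set_pmf M"]) (auto simp: assms mult.commute)

lemma int_bind_fin:
  fixes f :: "'c \<Rightarrow> real"
  assumes S: "finite (set_pmf M)" and N: "\<And>x. x \<in> set_pmf M \<Longrightarrow> finite (set_pmf (N x))"
  shows "measure_pmf.expectation (bind_pmf M N) f =
         measure_pmf.expectation M (\<lambda>x. measure_pmf.expectation (N x) f)"
proof -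
  define T where "T = (\<Union>x\<in>set_pmf M. set_pmf (N x))"
  have fT: "finite T" unfolding T_def by (rule finite_UN_I[OF S N])
  have pb: "pmf (bind_pmf M N) y = (\<Sum>x\<in>set_pmf M. pmf M x * pmf (N x) y)" for y
    by (simp add: pmf_bind int_fin[OF S])
  have "measure_pmf.expectation (bind_pmf M N) f = (\<Sum>y\<in>T. f y * pmf (bind_pmf M N) y)"
    by (rule integral_measure_pmf_real[OF fT]) (auto simp: T_def)
  also have "\<dots> = (\<Sum>y\<in>T. \<Sum>x\<in>set_pmf M. pmf M x * (pmf (N x) y * f y))"
    by (simp add: pb sum_distrib_right sum_distrib_left mult_ac)
  also have "\<dots> = (\<Sum>x\<in>set_pmf M. pmf M x * (\<Sum>y\<in>T. pmf (N x) y * f y))"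
    by (subst sum.swap) (simp add: sum_distrib_left)
  also have "\<dots> = (\<Sum>x\<in>set_pmf M. pmf M x * measure_pmf.expectation (N x) f)"
  proof (rule sum.cong[OF refl])
    fix x assume x: "x \<in> set_pmf M"
    have "measure_pmf.expectation (N x) f = (\<Sum>y\<in>T. f y * pmf (N x) y)"
      by (rule integral_measure_pmf_real[OF fT]) (use x in \<open>auto simp: T_def\<close>)
    then show "pmf M x * (\<Sum>y\<in>T. pmf (N x) y * f y) = pmf M x * measure_pmf.expectation (N x) f"
      by (simp add: mult_ac)
  qed
  also have "\<dots> = measure_pmf.expectation M (\<lambda>x. measure_pmf.expectation (N x) f)"
    by (simp add: int_fin[OF S])
  finally show ?thesis .
qed

lemma traj_fin: "finite (set_pmf (traj p mu pol n))" for p :: "'s::finite \<Rightarrow> 'a::finite \<Rightarrow> 's pmf"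
proof (induction n)
  case 0 show ?case by simp
next
  case (Suc n) show ?case using Suc by (auto simp: split_beta)
qed

lemma traj_len: "x \<in> set_pmf (traj p mu pol n) \<Longrightarrow> length (fst x) = n"
  by (induction n arbitrary: x) (auto simp: split_beta)

lemma ret_snoc: "ret r (h @ [(s, a)]) s' = ret r h s + r s a s'"
  by (induction r h s rule: ret.induct) auto


fun uu :: "('s::finite \<Rightarrow> 'a::finite \<Rightarrow> 's pmf) \<Rightarrow> 's \<Rightarrow> nat \<Rightarrow> 's \<Rightarrow> real" where
  "uu p e 0 s = (if s = e then 0 else 1)"
| "uu p e (Suc n) s = (if s = e then 0
     else Max (range (\<lambda>a. \<Sum>s'\<in>UNIV. pmf (p s a) s' * uu p e n s')))"

fun XX :: "('s::finite \<Rightarrow> 'a::finite \<Rightarrow> 's pmf) \<Rightarrow> 's \<Rightarrow> nat \<Rightarrow> 's set" where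
  "XX p e 0 = {s. s \<noteq> e}"
| "XX p e (Suc k) = {s \<in> XX p e k. \<exists>a. set_pmf (p s a) \<subseteq> XX p e k}"

lemma E1_bounds:
  fixes M :: "'s::finite pmf" and f :: "'s \<Rightarrow> real"
  assumes "\<And>s. 0 \<le> f s" "\<And>s. f s \<le> 1"
  shows "0 \<le> (\<Sum>s'\<in>UNIV. pmf M s' * f s')" "(\<Sum>s'\<in>UNIV. pmf M s' * f s') \<le> 1"
proof -
  show "0 \<le> (\<Sum>s'\<in>UNIV. pmf M s' * f s')" using assms by (intro sum_nonneg) auto
  have "(\<Sum>s'\<in>UNIV. pmf M s' * f s') \<le> (\<Sum>s'\<in>UNIV. pmf M s')"
    using assms by (intro sum_mono) (simp add: mult_left_le)
  also have "\<dots> = 1" by (rule sum_pmf_eq_1) auto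
  finally show "(\<Sum>s'\<in>UNIV. pmf M s' * f s') \<le> 1" .
qed

lemma exp_fin_type:
  fixes M :: "'s::finite pmf" and f :: "'s \<Rightarrow> real"
  shows "measure_pmf.expectation M f = (\<Sum>s'\<in>UNIV. pmf M s' * f s')"
  by (subst integral_measure_pmf_real[where A=UNIV]) (auto simp: mult.commute)

lemma uu_bounds: "0 \<le> uu p e n s \<and> uu p e n s \<le> 1"
proof (induction n arbitrary: s)
  case 0 then show ?case by simp
next
  case (Suc n)
  have fin: "finite (range (\<lambda>a. \<Sum>s'\<in>UNIV. pmf (p s a) s' * uu p e n s'))" by simp
  have "Max (range (\<lambda>a. \<Sum>s'\<in>UNIV. pmf (p s a) s' * uu p e n s'))
     \<in> range (\<lambda>a. \<Sum>s'\<in>UNIV. pmf (p s a) s' * uu p e n s')"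
    by (rule Max_in[OF fin]) simp
  then obtain a where "Max (range (\<lambda>a. \<Sum>s'\<in>UNIV. pmf (p s a) s' * uu p e n s'))
       = (\<Sum>s'\<in>UNIV. pmf (p s a) s' * uu p e n s')"
    by blast
  with E1_bounds[of "uu p e n" "p s a"] Suc show ?case by auto
qed

lemma uu_e: "uu p e n e = 0"
  by (cases n) auto

lemma expect_bounds01:
  fixes M :: "'b pmf" and f :: "'b \<Rightarrow> real"
  assumes "\<And>x. 0 \<le> f x" "\<And>x. f x \<le> 1" "finite (set_pmf M)"
  shows "0 \<le> measure_pmf.expectation M f" "measure_pmf.expectation M f \<le> 1"
proof -
  show "0 \<le> measure_pmf.expectation M f" by (rule integral_nonneg_AE) (simp add: assms)
  have "measure_pmf.expectation M f \<le> measure_pmf.expectation M (\<lambda>_. 1)"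
    using assms by (intro integral_mono integrable_measure_pmf_finite) auto
  then show "measure_pmf.expectation M f \<le> 1" by simp
qed

context
  fixes p :: "'s::finite \<Rightarrow> 'a::finite \<Rightarrow> 's pmf" and e :: 's
  assumes sink: "\<And>a. p e a = return_pmf e"
begin

lemma one_step:
  fixes f g :: "'s \<Rightarrow> real"
  assumes H: "\<And>s a. (\<Sum>s'\<in>UNIV. pmf (p s a) s' * g s') \<le> f s"
  shows "measure_pmf.expectation (traj p mu pol (Suc n)) (\<lambda>x. g (snd x))
       \<le> measure_pmf.expectation (traj p mu pol n) (\<lambda>x. f (snd x))"
proof -
  have "measure_pmf.expectation (traj p mu pol (Suc n)) (\<lambda>x. g (snd x)) =
     measure_pmf.expectation (traj p mu pol n) (\<lambda>x. measure_pmf.expectation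
       ((\<lambda>(h, s). bind_pmf (pol h s) (\<lambda>a. map_pmf (\<lambda>s'. (h @ [(s, a)], s')) (p s a))) x)
       (\<lambda>x. g (snd x)))"
  proof -
    have fin: "finite (set_pmf ((\<lambda>(h, s). bind_pmf (pol h s) (\<lambda>a. map_pmf (\<lambda>s'. (h @ [(s, a)], s')) (p s a))) x))"
      for x :: "('s \<times> 'a) list \<times> 's"
      by (cases x) (simp only: prod.case set_bind_pmf set_map_pmf, intro finite_UN_I finite_imageI, simp_all)
    show ?thesis by (simp only: traj.simps, rule int_bind_fin[OF traj_fin fin])
  qed
  also have "\<dots> \<le> measure_pmf.expectation (traj p mu pol n) (\<lambda>x. f (snd x))"
  proof (rule integral_mono[OF integrable_measure_pmf_finite integrable_measure_pmf_finite])
    show "finite (set_pmf (traj p mu pol n))" by (rule traj_fin)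
    show "finite (set_pmf (traj p mu pol n))" by (rule traj_fin)
    fix x :: "('s \<times> 'a) list \<times> 's"
    obtain h s where x: "x = (h, s)" by (cases x)
    have "measure_pmf.expectation (bind_pmf (pol h s) (\<lambda>a. map_pmf (\<lambda>s'. (h @ [(s, a)], s')) (p s a)))
       (\<lambda>x. g (snd x)) = measure_pmf.expectation (pol h s) (\<lambda>a. measure_pmf.expectation
         (map_pmf (\<lambda>s'. (h @ [(s, a)], s')) (p s a)) (\<lambda>x. g (snd x)))"
      by (rule int_bind_fin) auto
    also have "\<dots> = measure_pmf.expectation (pol h s) (\<lambda>a. \<Sum>s'\<in>UNIV. pmf (p s a) s' * g s')"
      by (simp add: exp_fin_type)
    also have "\<dots> \<le> measure_pmf.expectation (pol h s) (\<lambda>a. f s)"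
      by (intro integral_mono integrable_measure_pmf_finite H) auto
    also have "\<dots> = f s" by simp
    finally show "measure_pmf.expectation
       ((\<lambda>(h, s). bind_pmf (pol h s) (\<lambda>a. map_pmf (\<lambda>s'. (h @ [(s, a)], s')) (p s a))) x)
       (\<lambda>x. g (snd x)) \<le> f (snd x)" by (simp add: x)
  qed
  finally show ?thesis .
qed

lemma uu_step: "(\<Sum>s'\<in>UNIV. pmf (p s a) s' * uu p e n s') \<le> uu p e (Suc n) s"
proof (cases "s = e")
  case True
  have "(\<Sum>s'\<in>UNIV. pmf (p s a) s' * uu p e n s') = measure_pmf.expectation (p s a) (uu p e n)"
    by (simp add: exp_fin_type)
  also have "\<dots> = 0" using True by (simp add: sink uu_e)
  finally show ?thesis using True by simp
next
  case False
  have "(\<Sum>s'\<in>UNIV. pmf (p s a) s' * uu p e n s') \<le> Max (range (\<lambda>a. \<Sum>s'\<in>UNIV. pmf (p s a) s' * uu p e n s'))"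
    by (rule Max_ge) auto
  then show ?thesis using False by simp
qed

lemma chain: "measure_pmf.expectation (traj p mu pol (m + n)) (\<lambda>x. uu p e 0 (snd x))
   \<le> measure_pmf.expectation (traj p mu pol m) (\<lambda>x. uu p e n (snd x))"
proof (induction n arbitrary: m)
  case 0 then show ?case by simp
next
  case (Suc n)
  have "measure_pmf.expectation (traj p mu pol (m + Suc n)) (\<lambda>x. uu p e 0 (snd x))
     = measure_pmf.expectation (traj p mu pol (Suc m + n)) (\<lambda>x. uu p e 0 (snd x))" by simp
  also have "\<dots> \<le> measure_pmf.expectation (traj p mu pol (Suc m)) (\<lambda>x. uu p e n (snd x))"
    by (rule Suc)
  also have "\<dots> \<le> measure_pmf.expectation (traj p mu pol m) (\<lambda>x. uu p e (Suc n) (snd x))"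
    by (rule one_step, rule uu_step)
  finally show ?case .
qed

lemma XX_Suc_sub: "XX p e (Suc k) \<subseteq> XX p e k" by auto

lemma XX_sub0: "XX p e k \<subseteq> XX p e 0"
  by (induction k) auto

lemma delta_ex: "\<exists>\<delta>>0. \<delta> \<le> 1 \<and> (\<forall>s a s'. 0 < pmf (p s a) s' \<longrightarrow> \<delta> \<le> pmf (p s a) s')"
proof -
  define A where "A = insert 1 {pmf (p s a) s' | s a s'. 0 < pmf (p s a) s'}"
  have "{pmf (p s a) s' | s a s'. 0 < pmf (p s a) s'} \<subseteq> (\<lambda>x. pmf (p (fst x) (fst (snd x))) (snd (snd x))) ` UNIV"
  proof
    fix y assume "y \<in> {pmf (p s a) s' | s a s'. 0 < pmf (p s a) s'}"
    then obtain s a s' where "y = pmf (p s a) s'" by blast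
    then show "y \<in> (\<lambda>x. pmf (p (fst x) (fst (snd x))) (snd (snd x))) ` UNIV"
      by (intro image_eqI[where x="(s, a, s')"]) simp_all
  qed
  then have "finite {pmf (p s a) s' | s a s'. 0 < pmf (p s a) s'}" by (rule finite_subset) simp
  then have fA: "finite A" unfolding A_def by simp
  have pos: "\<forall>x\<in>A. 0 < x" unfolding A_def by auto
  have one: "1 \<in> A" unfolding A_def by simp
  then have "A \<noteq> {}" by blast
  then have "Min A \<in> A" using fA by (intro Min_in) 
  then have m0: "0 < Min A" using pos by blast
  show ?thesis
  proof (intro exI[of _ "Min A"] conjI allI impI)
    show "0 < Min A" by (rule m0)
    show "Min A \<le> 1" using fA one by (rule Min_le)
    fix s a s' assume "0 < pmf (p s a) s'"
    then have "pmf (p s a) s' \<in> A" unfolding A_def by blast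
    then show "Min A \<le> pmf (p s a) s'" using fA by (intro Min_le)
  qed
qed

lemma uu_XX:
  assumes d0: "0 < \<delta>" and d1: "\<delta> \<le> 1" and dm: "\<And>s a s'. 0 < pmf (p s a) s' \<Longrightarrow> \<delta> \<le> pmf (p s a) s'"
  shows "s \<notin> XX p e k \<Longrightarrow> k \<le> j \<Longrightarrow> uu p e j s \<le> 1 - \<delta> ^ k"
proof (induction k arbitrary: s j)
  case 0 then show ?case by (simp add: uu_e)
next
  case (Suc k)
  show ?case
  proof (cases "s \<in> XX p e k")
    case False
    then have "uu p e j s \<le> 1 - \<delta> ^ k" using Suc by auto
    moreover have "\<delta> ^ Suc k \<le> \<delta> ^ k" using d0 d1 by (simp add: power_decreasing)
    ultimately show ?thesis by simp
  next
    case True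
    then have se: "s \<noteq> e" using XX_sub0 by fastforce
    have nos: "\<forall>a. \<not> set_pmf (p s a) \<subseteq> XX p e k" using True Suc.prems(1) by auto
    obtain j' where j: "j = Suc j'" and kj: "k \<le> j'" using Suc.prems(2) by (cases j) auto
    have "Max (range (\<lambda>a. \<Sum>s'\<in>UNIV. pmf (p s a) s' * uu p e j' s')) \<le> 1 - \<delta> ^ Suc k"
    proof (subst Max_le_iff, simp, simp, clarify)
      fix a
      obtain s'' where s1: "s'' \<in> set_pmf (p s a)" and s2: "s'' \<notin> XX p e k" using nos by blast
      have ps: "\<delta> \<le> pmf (p s a) s''" using s1 dm by (simp add: pmf_positive)
      have us: "uu p e j' s'' \<le> 1 - \<delta> ^ k" using Suc.IH[OF s2 kj] .
      have "(\<Sum>s'\<in>UNIV. pmf (p s a) s' * uu p e j' s')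
          \<le> (\<Sum>s'\<in>UNIV. pmf (p s a) s' - (if s' = s'' then pmf (p s a) s' * \<delta> ^ k else 0))"
      proof (rule sum_mono)
        fix s' :: 's
        show "pmf (p s a) s' * uu p e j' s' \<le> pmf (p s a) s' - (if s' = s'' then pmf (p s a) s' * \<delta> ^ k else 0)"
        proof (cases "s' = s''")
          case True
          have "pmf (p s a) s' * uu p e j' s' \<le> pmf (p s a) s' * (1 - \<delta> ^ k)"
            using us True by (intro mult_left_mono) auto
          then show ?thesis using True by (simp add: algebra_simps)
        next
          case False
          have "pmf (p s a) s' * uu p e j' s' \<le> pmf (p s a) s' * 1"
            using uu_bounds[of p e j' s'] by (intro mult_left_mono) auto
          then show ?thesis using False by simp
        qed
      qed
      also have "\<dots> = 1 - pmf (p s a) s'' * \<delta> ^ k"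
        by (simp add: sum_subtractf sum_pmf_eq_1)
      also have "\<dots> \<le> 1 - \<delta> * \<delta> ^ k"
        using ps d0 by (intro diff_left_mono mult_right_mono) auto
      finally show "(\<Sum>s'\<in>UNIV. pmf (p s a) s' * uu p e j' s') \<le> 1 - \<delta> ^ Suc k" by simp
    qed
    then show ?thesis using se j by simp
  qed
qed

end


definition qq :: "('s::finite \<Rightarrow> 'a::finite \<Rightarrow> 's pmf) \<Rightarrow> 's \<Rightarrow> 's pmf \<Rightarrow> ('s, 'a) hr_policy \<Rightarrow> nat \<Rightarrow> real" where
  "qq p e mu pol n = measure_pmf.expectation (traj p mu pol n) (\<lambda>x. uu p e 0 (snd x))"

lemma qq_bounds: "0 \<le> qq p e mu pol n" "qq p e mu pol n \<le> 1"
  unfolding qq_def using uu_bounds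
  by (intro expect_bounds01 traj_fin; simp)+

context
  fixes p :: "'s::finite \<Rightarrow> 'a::finite \<Rightarrow> 's pmf" and e :: 's
  assumes sink: "\<And>a. p e a = return_pmf e"
    and transient: "\<And>d' s s'. s \<noteq> e \<Longrightarrow> s' \<noteq> e \<Longrightarrow>
        summable (\<lambda>n. measure_pmf.prob (traj p (return_pmf s) (sd_policy d') n) {x. snd x = s'})"
begin

lemma XX_empty: "\<exists>k. XX p e k = {}"
proof -
  have "\<exists>k. XX p e (Suc k) = XX p e k"
  proof (rule ccontr)
    assume "\<not> ?thesis"
    then have ne: "\<And>k. XX p e (Suc k) \<noteq> XX p e k" by auto
    have "card (XX p e k) + k \<le> card (XX p e 0)" for k
    proof (induction k)
      case 0 then show ?case by simp
    next
      case (Suc k)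
      have "XX p e (Suc k) \<subset> XX p e k" using ne[of k] XX_Suc_sub[of p e k, OF sink] by blast
      then have "card (XX p e (Suc k)) < card (XX p e k)" by (intro psubset_card_mono) auto
      then show ?case using Suc by simp
    qed
    from this[of "Suc (card (XX p e 0))"] show False by simp
  qed
  then obtain k where k: "XX p e (Suc k) = XX p e k" by blast
  define W where "W = XX p e k"
  have cl: "\<exists>a. set_pmf (p s a) \<subseteq> W" if "s \<in> W" for s
  proof -
    have "s \<in> XX p e (Suc k)" using k that W_def by simp
    then show ?thesis by (simp add: W_def)
  qed
  have "W = {}"
  proof (rule ccontr)
    assume "W \<noteq> {}" then obtain s0 where s0: "s0 \<in> W" by blast
    define d' where "d' s = (SOME a. set_pmf (p s a) \<subseteq> W)" for s
    have d': "set_pmf (p s (d' s)) \<subseteq> W" if "s \<in> W" for s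
      unfolding d'_def using cl[OF that] by (rule someI_ex)
    have supp: "snd x \<in> W" if "x \<in> set_pmf (traj p (return_pmf s0) (sd_policy d') n)" for n x
      using that
    proof (induction n arbitrary: x)
      case 0 then show ?case using s0 by auto
    next
      case (Suc n)
      from Suc.prems obtain h s s' where hs: "(h, s) \<in> set_pmf (traj p (return_pmf s0) (sd_policy d') n)"
        and s': "s' \<in> set_pmf (p s (d' s))" and xe: "snd x = s'"
        by (force simp: sd_policy_def split_beta)
      have "s \<in> W" using Suc.IH[OF hs] by simp
      then show ?case using d' s' xe by auto
    qed
    have WE: "W \<subseteq> {s. s \<noteq> e}" using XX_sub0[of p e, OF sink] W_def by auto
    have one: "(\<Sum>s'\<in>W. measure_pmf.prob (traj p (return_pmf s0) (sd_policy d') n) {x. snd x = s'}) = 1" for n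
    proof -
      have "(\<Sum>s'\<in>W. measure_pmf.prob (traj p (return_pmf s0) (sd_policy d') n) {x. snd x = s'})
          = (\<Sum>s'\<in>W. pmf (map_pmf snd (traj p (return_pmf s0) (sd_policy d') n)) s')"
        by (simp add: pmf_map vimage_def)
      also have "\<dots> = 1" by (rule sum_pmf_eq_1) (auto dest: supp)
      finally show ?thesis .
    qed
    have "summable (\<lambda>n. \<Sum>s'\<in>W. measure_pmf.prob (traj p (return_pmf s0) (sd_policy d') n) {x. snd x = s'})"
      by (intro summable_sum transient) (use s0 WE in auto)
    then have "summable (\<lambda>n::nat. (1::real))" using one by simp
    then show False by (simp add: summable_const_iff)
  qed
  then show ?thesis using W_def by auto
qed

lemma decay: "\<exists>\<theta> K. 0 \<le> \<theta> \<and> \<theta> < 1 \<and> 0 < K \<and> (\<forall>mu pol n. qq p e mu pol n \<le> \<theta> ^ (n div K))"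
proof -
  obtain \<delta> where d0: "0 < \<delta>" and d1: "\<delta> \<le> 1" and dm: "\<And>s a s'. 0 < pmf (p s a) s' \<Longrightarrow> \<delta> \<le> pmf (p s a) s'"
    using delta_ex[of p e, OF sink] by blast
  obtain k where k: "XX p e k = {}" using XX_empty by blast
  define K where "K = Suc k"
  have XK: "XX p e K = {}" using XX_Suc_sub[of p e k, OF sink] k K_def by auto
  define \<theta> where "\<theta> = 1 - \<delta> ^ K"
  have dK: "0 < \<delta> ^ K" "\<delta> ^ K \<le> 1" using d0 d1 by (auto simp: power_le_one)
  have ub: "uu p e K s \<le> \<theta> * uu p e 0 s" for s
  proof (cases "s = e")
    case True then show ?thesis by (simp add: uu_e)
  next
    case False
    have "uu p e K s \<le> 1 - \<delta> ^ K" using uu_XX[of p e, OF sink d0 d1 dm, of s K K] XK by simp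
    then show ?thesis using False by (simp add: \<theta>_def)
  qed
  have step: "qq p e mu pol (m + K) \<le> \<theta> * qq p e mu pol m" for mu pol m
  proof -
    have "qq p e mu pol (m + K) \<le> measure_pmf.expectation (traj p mu pol m) (\<lambda>x. uu p e K (snd x))"
      unfolding qq_def by (rule chain[of p e, OF sink])
    also have "\<dots> \<le> measure_pmf.expectation (traj p mu pol m) (\<lambda>x. \<theta> * uu p e 0 (snd x))"
      by (intro integral_mono integrable_measure_pmf_finite traj_fin ub)
    also have "\<dots> = \<theta> * qq p e mu pol m" unfolding qq_def by simp
    finally show ?thesis .
  qed
  have th0: "0 \<le> \<theta>" using dK by (simp add: \<theta>_def)
  have jk: "qq p e mu pol (j * K + i) \<le> \<theta> ^ j" for mu pol j i
  proof (induction j)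
    case 0 then show ?case using qq_bounds by simp
  next
    case (Suc j)
    have "qq p e mu pol (Suc j * K + i) = qq p e mu pol ((j * K + i) + K)" by (simp add: algebra_simps)
    also have "\<dots> \<le> \<theta> * qq p e mu pol (j * K + i)" by (rule step)
    also have "\<dots> \<le> \<theta> * \<theta> ^ j" using Suc th0 by (intro mult_left_mono)
    finally show ?case by simp
  qed
  show ?thesis
  proof (intro exI[of _ \<theta>] exI[of _ K] conjI allI)
    show "0 \<le> \<theta>" by (rule th0)
    show "\<theta> < 1" using dK by (simp add: \<theta>_def)
    show "0 < K" by (simp add: K_def)
    fix mu pol n
    have "n = (n div K) * K + n mod K" by simp
    then show "qq p e mu pol n \<le> \<theta> ^ (n div K)" using jk[of mu pol "n div K" "n mod K"] by metis
  qed
qed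

end


lemma traj_Suc_exp:
  fixes G :: "('s::finite \<times> 'a::finite) list \<times> 's \<Rightarrow> real"
  shows "measure_pmf.expectation (traj p mu pol (Suc n)) G =
     measure_pmf.expectation (traj p mu pol n) (\<lambda>x. measure_pmf.expectation (pol (fst x) (snd x))
       (\<lambda>a. measure_pmf.expectation (p (snd x) a) (\<lambda>s'. G (fst x @ [(snd x, a)], s'))))"
proof -
  have fin: "finite (set_pmf ((\<lambda>(h, s). bind_pmf (pol h s) (\<lambda>a. map_pmf (\<lambda>s'. (h @ [(s, a)], s')) (p s a))) x))"
    for x :: "('s \<times> 'a) list \<times> 's"
    by (cases x) (simp only: prod.case set_bind_pmf set_map_pmf, intro finite_UN_I finite_imageI, simp_all)
  have "measure_pmf.expectation (traj p mu pol (Suc n)) G =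
     measure_pmf.expectation (traj p mu pol n) (\<lambda>x. measure_pmf.expectation
       ((\<lambda>(h, s). bind_pmf (pol h s) (\<lambda>a. map_pmf (\<lambda>s'. (h @ [(s, a)], s')) (p s a))) x) G)"
    by (simp only: traj.simps, rule int_bind_fin[OF traj_fin fin])
  also have "\<dots> = measure_pmf.expectation (traj p mu pol n) (\<lambda>x. measure_pmf.expectation (pol (fst x) (snd x))
       (\<lambda>a. measure_pmf.expectation (p (snd x) a) (\<lambda>s'. G (fst x @ [(snd x, a)], s'))))"
  proof (rule Bochner_Integration.integral_cong[OF refl])
    fix x :: "('s \<times> 'a) list \<times> 's"
    obtain h s where x: "x = (h, s)" by (cases x)
    show "measure_pmf.expectation ((\<lambda>(h, s). bind_pmf (pol h s) (\<lambda>a. map_pmf (\<lambda>s'. (h @ [(s, a)], s')) (p s a))) x) G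
      = measure_pmf.expectation (pol (fst x) (snd x))
       (\<lambda>a. measure_pmf.expectation (p (snd x) a) (\<lambda>s'. G (fst x @ [(snd x, a)], s')))"
      unfolding x by (simp only: prod.case fst_conv snd_conv, subst int_bind_fin) auto
  qed
  finally show ?thesis .
qed

definition cnt :: "'s \<Rightarrow> ('s \<times> 'a) list \<Rightarrow> nat" where
  "cnt e h = length (filter (\<lambda>x. fst x \<noteq> e) h)"

definition FF :: "'s \<Rightarrow> real \<Rightarrow> ('s \<times> 'a) list \<Rightarrow> real" where
  "FF e l h = 1 + (\<Sum>k<length h. if fst (h ! k) \<noteq> e then l ^ Suc k - l ^ k else 0)"

lemma cnt_le: "cnt e h \<le> length h"
  unfolding cnt_def by simp

lemma cnt_snoc: "cnt e (h @ [x]) = cnt e h + (if fst x \<noteq> e then 1 else 0)"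
  unfolding cnt_def by simp

lemma FF_snoc: "FF e l (h @ [x]) = FF e l h + (if fst x \<noteq> e then l ^ Suc (length h) - l ^ length h else 0)"
proof -
  have "(\<Sum>k<length (h @ [x]). if fst ((h @ [x]) ! k) \<noteq> e then l ^ Suc k - l ^ k else 0)
      = (\<Sum>k<length h. if fst ((h @ [x]) ! k) \<noteq> e then l ^ Suc k - l ^ k else 0)
        + (if fst x \<noteq> e then l ^ Suc (length h) - l ^ length h else 0)"
    by simp
  also have "(\<Sum>k<length h. if fst ((h @ [x]) ! k) \<noteq> e then l ^ Suc k - l ^ k else 0)
      = (\<Sum>k<length h. if fst (h ! k) \<noteq> e then l ^ Suc k - l ^ k else 0)"
    by (intro sum.cong) (auto simp: nth_append)
  finally show ?thesis unfolding FF_def by simp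
qed

lemma pow_cnt_le_FF:
  assumes l: "1 \<le> (l::real)"
  shows "l ^ cnt e h \<le> FF e l h"
proof (induction h rule: rev_induct)
  case Nil then show ?case by (simp add: cnt_def FF_def)
next
  case (snoc x h)
  show ?case
  proof (cases "fst x \<noteq> e")
    case True
    have "l ^ cnt e h \<le> l ^ length h" using l cnt_le by (intro power_increasing) auto
    then have "l ^ cnt e h * (l - 1) \<le> l ^ length h * (l - 1)" using l by (intro mult_right_mono) auto
    then have "l ^ Suc (cnt e h) \<le> l ^ cnt e h + (l ^ Suc (length h) - l ^ length h)"
      by (simp add: algebra_simps)
    then show ?thesis using True snoc by (simp add: cnt_snoc FF_snoc)
  next
    case False
    then show ?thesis using snoc by (simp add: cnt_snoc FF_snoc)
  qed
qed

lemma FF_exp: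
  fixes p :: "'s::finite \<Rightarrow> 'a::finite \<Rightarrow> 's pmf"
  shows "measure_pmf.expectation (traj p mu pol n) (\<lambda>x. FF e l (fst x))
     = 1 + (\<Sum>k<n. (l ^ Suc k - l ^ k) * qq p e mu pol k)"
proof (induction n)
  case 0 then show ?case by (simp add: FF_def)
next
  case (Suc n)
  have "measure_pmf.expectation (traj p mu pol (Suc n)) (\<lambda>x. FF e l (fst x))
     = measure_pmf.expectation (traj p mu pol n) (\<lambda>x. FF e l (fst x) +
          (l ^ Suc n - l ^ n) * uu p e 0 (snd x))"
  proof (subst traj_Suc_exp, rule integral_cong_AE)
    show "AE x in measure_pmf (traj p mu pol n). measure_pmf.expectation (pol (fst x) (snd x))
       (\<lambda>a. measure_pmf.expectation (p (snd x) a) (\<lambda>s'. FF e l (fst (fst x @ [(snd x, a)], s')))) =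
       FF e l (fst x) + (l ^ Suc n - l ^ n) * uu p e 0 (snd x)"
    proof (rule AE_pmfI)
      fix x assume "x \<in> set_pmf (traj p mu pol n)"
      then have "length (fst x) = n" by (rule traj_len)
      then show "measure_pmf.expectation (pol (fst x) (snd x))
       (\<lambda>a. measure_pmf.expectation (p (snd x) a) (\<lambda>s'. FF e l (fst (fst x @ [(snd x, a)], s')))) =
       FF e l (fst x) + (l ^ Suc n - l ^ n) * uu p e 0 (snd x)"
        by (simp add: FF_snoc)
    qed
  qed auto
  also have "\<dots> = measure_pmf.expectation (traj p mu pol n) (\<lambda>x. FF e l (fst x))
     + (l ^ Suc n - l ^ n) * qq p e mu pol n"
    unfolding qq_def
    by (subst Bochner_Integration.integral_add) (auto intro!: integrable_measure_pmf_finite traj_fin)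
  finally show ?case using Suc by simp
qed


context
  fixes p :: "'s::finite \<Rightarrow> 'a::finite \<Rightarrow> 's pmf" and e :: 's
  assumes sink: "\<And>a. p e a = return_pmf e"
    and transient: "\<And>d' s s'. s \<noteq> e \<Longrightarrow> s' \<noteq> e \<Longrightarrow>
        summable (\<lambda>n. measure_pmf.prob (traj p (return_pmf s) (sd_policy d') n) {x. snd x = s'})"
begin

lemma expmom: "\<exists>(l::real) K0. 1 < l \<and> (\<forall>mu pol n. measure_pmf.expectation (traj p mu pol n) (\<lambda>x. l ^ cnt e (fst x)) \<le> K0)"
proof -
  obtain \<theta> K where th0: "0 \<le> \<theta>" and th1: "\<theta> < 1" and K0: "0 < K"
    and dec: "\<And>mu pol n. qq p e mu pol n \<le> \<theta> ^ (n div K)"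
    using decay[OF sink transient] by blast
  define \<theta>' where "\<theta>' = max \<theta> (1/2)"
  have t'0: "0 < \<theta>'" and t'1: "\<theta>' < 1" and tt: "\<theta> \<le> \<theta>'" using th1 by (auto simp: \<theta>'_def)
  define \<rho> where "\<rho> = root K \<theta>'"
  have r0: "0 < \<rho>" and r1: "\<rho> < 1" using t'0 t'1 K0 by (auto simp: \<rho>_def)
  have rK: "\<rho> ^ K = \<theta>'" using t'0 K0 by (simp add: \<rho>_def)
  have tail: "qq p e mu pol k \<le> (1/\<theta>') * \<rho> ^ k" for mu pol k
  proof -
    have "qq p e mu pol k \<le> \<theta> ^ (k div K)" by (rule dec)
    also have "\<dots> \<le> \<theta>' ^ (k div K)" using th0 tt by (intro power_mono)
    also have "\<dots> \<le> (1/\<theta>') * \<rho> ^ k"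
    proof -
      have "k mod K \<le> K" using K0 by (simp add: order_less_imp_le)
      then have "\<rho> ^ K \<le> \<rho> ^ (k mod K)" using r0 r1 by (intro power_decreasing) auto
      have "\<rho> ^ k = \<rho> ^ (K * (k div K) + k mod K)" by simp
      also have "\<dots> = \<theta>' ^ (k div K) * \<rho> ^ (k mod K)" by (simp only: power_add power_mult rK)
      also have "\<dots> \<ge> \<theta>' ^ (k div K) * \<theta>'" using \<open>\<rho> ^ K \<le> \<rho> ^ (k mod K)\<close> rK t'0
        by (intro mult_left_mono) auto
      finally have "\<theta>' ^ (k div K) * \<theta>' \<le> \<rho> ^ k" .
      then show ?thesis using t'0 by (simp add: field_simps)
    qed
    finally show ?thesis .
  qed
  define \<sigma> where "\<sigma> = sqrt \<rho>"
  have s0: "0 < \<sigma>" and s1: "\<sigma> < 1" using r0 r1 by (auto simp: \<sigma>_def)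
  have ss: "\<rho> = \<sigma> * \<sigma>" using r0 by (simp add: \<sigma>_def)
  define l where "l = 1 / \<sigma>"
  have l1: "1 < l" using s0 s1 by (simp add: l_def)
  have lsk: "l ^ k * \<sigma> ^ k = 1" for k
    using s0 by (simp add: l_def power_mult_distrib[symmetric])
  have term_bd: "(l ^ Suc k - l ^ k) * qq p e mu pol k \<le> (1/\<theta>') * (l - 1) * \<sigma> ^ k" for mu pol k
  proof -
    have "0 \<le> l ^ Suc k - l ^ k" using l1 by (simp add: algebra_simps)
    then have "(l ^ Suc k - l ^ k) * qq p e mu pol k \<le> (l ^ Suc k - l ^ k) * ((1/\<theta>') * \<rho> ^ k)"
      by (intro mult_left_mono tail)
    also have "\<dots> = (1/\<theta>') * (l - 1) * (l ^ k * \<sigma> ^ k) * \<sigma> ^ k"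
      by (simp add: ss power_mult_distrib algebra_simps)
    also have "\<dots> = (1/\<theta>') * (l - 1) * \<sigma> ^ k" by (simp add: lsk)
    finally show ?thesis .
  qed
  have gs: "(\<Sum>k<n. \<sigma> ^ k) \<le> 1 / (1 - \<sigma>)" for n
  proof -
    have "(\<Sum>k<n. \<sigma> ^ k) = (1 - \<sigma> ^ n) / (1 - \<sigma>)" using s1 by (simp add: sum_gp_strict)
    also have "\<dots> \<le> 1 / (1 - \<sigma>)" using s0 s1 by (intro divide_right_mono) auto
    finally show ?thesis .
  qed
  define K1 where "K1 = 1 + (1/\<theta>') * (l - 1) * (1 / (1 - \<sigma>))"
  have "\<forall>mu pol n. measure_pmf.expectation (traj p mu pol n) (\<lambda>x. l ^ cnt e (fst x)) \<le> K1"
  proof (intro allI)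
    fix mu pol n
    have "measure_pmf.expectation (traj p mu pol n) (\<lambda>x. l ^ cnt e (fst x))
        \<le> measure_pmf.expectation (traj p mu pol n) (\<lambda>x. FF e l (fst x))"
      using l1 by (intro integral_mono integrable_measure_pmf_finite traj_fin pow_cnt_le_FF) auto
    also have "\<dots> = 1 + (\<Sum>k<n. (l ^ Suc k - l ^ k) * qq p e mu pol k)" by (rule FF_exp)
    also have "\<dots> \<le> 1 + (\<Sum>k<n. (1/\<theta>') * (l - 1) * \<sigma> ^ k)"
      by (intro add_left_mono sum_mono term_bd)
    also have "\<dots> = 1 + (1/\<theta>') * (l - 1) * (\<Sum>k<n. \<sigma> ^ k)" by (simp add: sum_distrib_left)
    also have "\<dots> \<le> K1" unfolding K1_def using t'0 l1
      by (intro add_left_mono mult_left_mono gs) auto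
    finally show "measure_pmf.expectation (traj p mu pol n) (\<lambda>x. l ^ cnt e (fst x)) \<le> K1" .
  qed
  then show ?thesis using l1 by blast
qed

end




lemma exp_quad: "exp (y::real) \<le> 1 + y + y\<^sup>2 * exp \<bar>y\<bar>"
proof -
  obtain t where t: "\<bar>t\<bar> \<le> \<bar>y\<bar>" and ey: "exp y = (\<Sum>m<2. y ^ m / fact m) + exp t / fact 2 * y ^ 2"
    using Maclaurin_exp_le[of y 2] by blast
  have s2: "(\<Sum>m<2. y ^ m / fact m) = 1 + y" by (simp add: eval_nat_numeral)
  have f2: "fact 2 = (2::real)" by (simp add: eval_nat_numeral)
  have "exp t \<le> exp \<bar>y\<bar>" using t by simp
  moreover have "0 < exp t" by simp
  ultimately have "exp t / fact 2 \<le> exp \<bar>y\<bar>" unfolding f2 by linarith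
  then have "exp t / fact 2 * y ^ 2 \<le> exp \<bar>y\<bar> * y\<^sup>2"
    by (intro mult_right_mono) auto
  then show ?thesis using ey s2 by (simp add: mult.commute)
qed

lemma sq_le_exp: assumes "0 \<le> (u::real)" shows "u\<^sup>2 \<le> 16 * exp (u / 2)"
proof -
  have e: "exp (u/2) = exp (u/4) * exp (u/4)" by (simp add: exp_add[symmetric])
  have a: "u / 4 \<le> exp (u/4)" using exp_ge_add_one_self[of "u/4"] by linarith
  have b: "0 \<le> u / 4" using assms by simp
  have "(u/4) * (u/4) \<le> exp (u/4) * exp (u/4)" using a b by (intro mult_mono) auto
  then have "(u/4) * (u/4) \<le> exp (u/2)" using e by simp
  then show ?thesis by (simp add: power2_eq_square)
qed

lemma int_affine:
  fixes f :: "'b \<Rightarrow> real"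
  assumes "finite (set_pmf M)"
  shows "measure_pmf.expectation M (\<lambda>x. a + b * f x) = a + b * measure_pmf.expectation M f"
  by (subst Bochner_Integration.integral_add) (auto intro: integrable_measure_pmf_finite[OF assms])

lemma ERM_map: "\<beta> \<noteq> 0 \<Longrightarrow> ERM \<beta> (map_pmf f M) = - (1 / \<beta>) * ln (measure_pmf.expectation M (\<lambda>x. exp (- \<beta> * f x)))"
  by (simp add: ERM_def)

lemma ERM_map0: "ERM 0 (map_pmf f M) = measure_pmf.expectation M f"
  by (simp add: ERM_def)

lemma exp_pos_pmf:
  fixes f :: "'b \<Rightarrow> real"
  assumes fin: "finite (set_pmf M)"
  shows "0 < measure_pmf.expectation M (\<lambda>x. exp (f x))"
proof -
  have "measure_pmf.expectation M (\<lambda>x. exp (f x)) = (\<Sum>x\<in>set_pmf M. pmf M x * exp (f x))"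
    by (rule int_fin[OF fin])
  also have "\<dots> > 0"
    using fin set_pmf_not_empty[of M] by (intro sum_pos) (auto simp: pmf_positive)
  finally show ?thesis .
qed

lemma ERM_le:
  fixes f :: "'b \<Rightarrow> real"
  assumes fin: "finite (set_pmf M)" and b: "0 < \<beta>"
  shows "ERM \<beta> (map_pmf f M) \<le> measure_pmf.expectation M f"
proof -
  define m where "m = - \<beta> * measure_pmf.expectation M f"
  have pt: "exp m * (1 - m) + (- \<beta> * exp m) * f x \<le> exp (- \<beta> * f x)" for x
  proof -
    have "1 + (- \<beta> * f x - m) \<le> exp (- \<beta> * f x - m)" by (rule exp_ge_add_one_self)
    then have "exp m * (1 + (- \<beta> * f x - m)) \<le> exp m * exp (- \<beta> * f x - m)" by simp
    also have "\<dots> = exp (- \<beta> * f x)" by (simp add: exp_diff)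
    finally show ?thesis by (simp add: algebra_simps)
  qed
  have "exp m = measure_pmf.expectation M (\<lambda>x. exp m * (1 - m) + (- \<beta> * exp m) * f x)"
    by (subst int_affine[OF fin]) (simp add: m_def algebra_simps)
  also have "\<dots> \<le> measure_pmf.expectation M (\<lambda>x. exp (- \<beta> * f x))"
    by (intro integral_mono integrable_measure_pmf_finite[OF fin] pt)
  finally have "m \<le> ln (measure_pmf.expectation M (\<lambda>x. exp (- \<beta> * f x)))"
    by (metis exp_gt_zero ln_exp ln_le_cancel_iff order_less_le_trans)
  then have "- (1/\<beta>) * ln (measure_pmf.expectation M (\<lambda>x. exp (- \<beta> * f x))) \<le> - (1/\<beta>) * m"
    using b by (intro mult_left_mono_neg) auto
  then show ?thesis using b by (simp add: ERM_map m_def)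
qed

lemma ERM_ge:
  fixes f :: "'b \<Rightarrow> real"
  assumes fin: "finite (set_pmf M)" and b: "0 < \<beta>"
    and C: "measure_pmf.expectation M (\<lambda>x. (f x)\<^sup>2 * exp (\<beta> * \<bar>f x\<bar>)) \<le> C"
  shows "measure_pmf.expectation M f - \<beta> * C \<le> ERM \<beta> (map_pmf f M)"
proof -
  define z where "z = - \<beta> * measure_pmf.expectation M f + \<beta>\<^sup>2 * C"
  have pt: "exp (- \<beta> * f x) \<le> 1 + (- \<beta>) * f x + \<beta>\<^sup>2 * ((f x)\<^sup>2 * exp (\<beta> * \<bar>f x\<bar>))" for x
    using exp_quad[of "- \<beta> * f x"] b by (simp add: power_mult_distrib abs_mult)
  have "measure_pmf.expectation M (\<lambda>x. exp (- \<beta> * f x))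
     \<le> measure_pmf.expectation M (\<lambda>x. 1 + (- \<beta>) * f x + \<beta>\<^sup>2 * ((f x)\<^sup>2 * exp (\<beta> * \<bar>f x\<bar>)))"
    by (intro integral_mono integrable_measure_pmf_finite[OF fin] pt)
  also have "\<dots> = 1 + (- \<beta>) * measure_pmf.expectation M f + \<beta>\<^sup>2 * measure_pmf.expectation M (\<lambda>x. (f x)\<^sup>2 * exp (\<beta> * \<bar>f x\<bar>))"
    by (subst Bochner_Integration.integral_add, (auto intro: integrable_measure_pmf_finite[OF fin])[2],
        subst int_affine[OF fin], simp)
  also have "\<dots> \<le> 1 + z" unfolding z_def using C b by (simp add: mult_left_mono)
  also have "\<dots> \<le> exp z" by (rule exp_ge_add_one_self)
  finally have le: "measure_pmf.expectation M (\<lambda>x. exp (- \<beta> * f x)) \<le> exp z" .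
  have pos: "0 < measure_pmf.expectation M (\<lambda>x. exp (- \<beta> * f x))" by (rule exp_pos_pmf[OF fin])
  have "ln (measure_pmf.expectation M (\<lambda>x. exp (- \<beta> * f x))) \<le> z"
    using le pos by (metis ln_exp ln_le_cancel_iff exp_gt_zero)
  then have "- (1/\<beta>) * z \<le> - (1/\<beta>) * ln (measure_pmf.expectation M (\<lambda>x. exp (- \<beta> * f x)))"
    using b by (intro mult_left_mono_neg) auto
  moreover have "- (1/\<beta>) * z = measure_pmf.expectation M f - \<beta> * C"
    using b by (simp add: z_def power2_eq_square field_simps)
  ultimately show ?thesis using b by (simp add: ERM_map)
qed


lemma real_cont:
  fixes f :: "real \<Rightarrow> real"
  assumes b0: "0 < \<beta>0" and H: "\<And>\<beta>. 0 < \<beta> \<Longrightarrow> \<beta> \<le> \<beta>0 \<Longrightarrow> f 0 - \<beta> * C \<le> f \<beta> \<and> f \<beta> \<le> f 0"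
  shows "(f \<longlongrightarrow> f 0) (at_right 0)"
proof (rule tendsto_sandwich[of "\<lambda>\<beta>. f 0 - \<beta> * C" _ _ "\<lambda>_. f 0"])
  have ev: "eventually (\<lambda>x. x \<in> {0<..<\<beta>0}) (at_right (0::real))" using b0 by (rule eventually_at_right_real)
  show "eventually (\<lambda>\<beta>. f 0 - \<beta> * C \<le> f \<beta>) (at_right 0)"
    using ev by eventually_elim (use H in auto)
  show "eventually (\<lambda>\<beta>. f \<beta> \<le> f 0) (at_right 0)"
    using ev by eventually_elim (use H in auto)
  have "((\<lambda>\<beta>. f 0 - \<beta> * C) \<longlongrightarrow> f 0 - 0 * C) (at_right 0)" by (intro tendsto_intros)
  then show "((\<lambda>\<beta>. f 0 - \<beta> * C) \<longlongrightarrow> f 0) (at_right 0)" by simp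
qed auto

lemma liminf_cont:
  fixes G :: "real \<Rightarrow> nat \<Rightarrow> real"
  assumes b0: "0 < \<beta>0" and Bd: "\<And>t. \<bar>G 0 t\<bar> \<le> B"
    and H: "\<And>\<beta> t. 0 < \<beta> \<Longrightarrow> \<beta> \<le> \<beta>0 \<Longrightarrow> G 0 t - \<beta> * C \<le> G \<beta> t \<and> G \<beta> t \<le> G 0 t"
  shows "((\<lambda>\<beta>. liminf (\<lambda>t. ereal (G \<beta> t))) \<longlongrightarrow> liminf (\<lambda>t. ereal (G 0 t))) (at_right 0)"
proof -
  define L where "L = liminf (\<lambda>t. ereal (G 0 t))"
  have L1: "ereal (- B) \<le> L" unfolding L_def
    by (rule Liminf_bounded) (use Bd in \<open>auto intro!: always_eventually simp: abs_le_iff\<close>, smt (verit) Bd abs_le_iff)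
  have "L \<le> limsup (\<lambda>t. ereal (G 0 t))" unfolding L_def by (rule Liminf_le_Limsup) simp
  also have "\<dots> \<le> ereal B"
    by (rule Limsup_bounded) (use Bd in \<open>auto intro!: always_eventually simp: abs_le_iff\<close>)
  finally have L2: "L \<le> ereal B" .
  obtain l where Ll: "L = ereal l" using L1 L2 by (cases L) auto
  have bnd: "ereal (l - \<beta> * C) \<le> liminf (\<lambda>t. ereal (G \<beta> t)) \<and> liminf (\<lambda>t. ereal (G \<beta> t)) \<le> ereal l"
    if "0 < \<beta>" "\<beta> \<le> \<beta>0" for \<beta>
  proof
    have "liminf (\<lambda>t. ereal (G 0 t) + ereal (- \<beta> * C)) \<le> liminf (\<lambda>t. ereal (G \<beta> t))"
      by (rule Liminf_mono) (use H[OF that] in \<open>auto intro!: always_eventually\<close>)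
    moreover have "liminf (\<lambda>t. ereal (G 0 t) + ereal (- \<beta> * C)) = L + ereal (- \<beta> * C)"
      unfolding L_def by (rule Liminf_add_ereal_right) auto
    ultimately show "ereal (l - \<beta> * C) \<le> liminf (\<lambda>t. ereal (G \<beta> t))" using Ll by simp
    have "liminf (\<lambda>t. ereal (G \<beta> t)) \<le> L"
      unfolding L_def by (rule Liminf_mono) (use H[OF that] in \<open>auto intro!: always_eventually\<close>)
    then show "liminf (\<lambda>t. ereal (G \<beta> t)) \<le> ereal l" using Ll by simp
  qed
  have ev: "eventually (\<lambda>x. x \<in> {0<..<\<beta>0}) (at_right (0::real))" using b0 by (rule eventually_at_right_real)
  have "((\<lambda>\<beta>. liminf (\<lambda>t. ereal (G \<beta> t))) \<longlongrightarrow> ereal l) (at_right 0)"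
  proof (rule tendsto_sandwich[of "\<lambda>\<beta>. ereal (l - \<beta> * C)" _ _ "\<lambda>_. ereal l"])
    show "eventually (\<lambda>\<beta>. ereal (l - \<beta> * C) \<le> liminf (\<lambda>t. ereal (G \<beta> t))) (at_right 0)"
      using ev by eventually_elim (use bnd in auto)
    show "eventually (\<lambda>\<beta>. liminf (\<lambda>t. ereal (G \<beta> t)) \<le> ereal l) (at_right 0)"
      using ev by eventually_elim (use bnd in auto)
    have "((\<lambda>\<beta>. l - \<beta> * C) \<longlongrightarrow> l - 0 * C) (at_right 0)" by (intro tendsto_intros)
    then have "((\<lambda>\<beta>. l - \<beta> * C) \<longlongrightarrow> l) (at_right 0)" by simp
    then show "((\<lambda>\<beta>. ereal (l - \<beta> * C)) \<longlongrightarrow> ereal l) (at_right 0)" by (rule tendsto_ereal)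
  qed auto
  then show ?thesis using Ll L_def by simp
qed


lemma ret_rr:
  fixes p :: "'s::finite \<Rightarrow> 'a::finite \<Rightarrow> 's pmf"
  assumes sink: "\<And>a. p e a = return_pmf e" and sink_rew: "\<And>a. r e a e = 0"
  shows "x \<in> set_pmf (traj p mu pol n) \<Longrightarrow>
    ret r (fst x) (snd x) = ret (\<lambda>s a s'. if s = e then 0 else r s a s') (fst x) (snd x)"
proof (induction n arbitrary: x)
  case 0 then show ?case by auto
next
  case (Suc n)
  from Suc.prems obtain h s a s' where hs: "(h, s) \<in> set_pmf (traj p mu pol n)"
    and s': "s' \<in> set_pmf (p s a)" and xe: "x = (h @ [(s, a)], s')"
    by (force simp: split_beta)
  have "r s a s' = (if s = e then 0 else r s a s')"
    using s' sink sink_rew by (cases "s = e") auto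
  then show ?case using Suc.IH[OF hs] xe by (simp add: ret_snoc)
qed

lemma ret_bound:
  assumes R: "\<And>s a s'. \<bar>r s a s'\<bar> \<le> R"
  shows "\<bar>ret (\<lambda>s a s'. if s = e then 0 else r s a s') h s\<bar> \<le> R * real (cnt e h)"
proof (induction h arbitrary: s rule: rev_induct)
  case Nil then show ?case by (simp add: cnt_def)
next
  case (snoc x h)
  obtain s0 a0 where x: "x = (s0, a0)" by (cases x)
  have "\<bar>ret (\<lambda>s a s'. if s = e then 0 else r s a s') (h @ [x]) s\<bar>
      \<le> \<bar>ret (\<lambda>s a s'. if s = e then 0 else r s a s') h s0\<bar> + \<bar>(if s0 = e then 0 else r s0 a0 s)\<bar>"
    unfolding x ret_snoc by (rule abs_triangle_ineq)
  also have "\<dots> \<le> R * real (cnt e h) + (if s0 = e then 0 else R)"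
    using snoc.IH[of s0] R[of s0 a0 s] by auto
  also have "\<dots> = R * real (cnt e (h @ [x]))" by (simp add: cnt_snoc x algebra_simps)
  finally show ?case .
qed

context
  fixes p :: "'s::finite \<Rightarrow> 'a::finite \<Rightarrow> 's pmf" and e :: 's and r :: "'s \<Rightarrow> 'a \<Rightarrow> 's \<Rightarrow> real"
    and mu :: "'s pmf"
  assumes sink: "\<And>a. p e a = return_pmf e"
    and sink_rew: "\<And>a. r e a e = 0"
    and transient: "\<And>d' s s'. s \<noteq> e \<Longrightarrow> s' \<noteq> e \<Longrightarrow>
        summable (\<lambda>n. measure_pmf.prob (traj p (return_pmf s) (sd_policy d') n) {x. snd x = s'})"
begin

lemma unif: "\<exists>B C \<beta>0. 0 < \<beta>0 \<and> (\<forall>t pol. \<bar>g p r mu t pol 0\<bar> \<le> B) \<and>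
  (\<forall>t pol \<beta>. 0 < \<beta> \<longrightarrow> \<beta> \<le> \<beta>0 \<longrightarrow> g p r mu t pol 0 - \<beta> * C \<le> g p r mu t pol \<beta> \<and> g p r mu t pol \<beta> \<le> g p r mu t pol 0)"
proof -
  obtain l K0 where l1: "1 < (l::real)"
    and mom: "\<And>mu pol n. measure_pmf.expectation (traj p mu pol n) (\<lambda>x. l ^ cnt e (fst x)) \<le> K0"
    using expmom[OF sink transient] by blast
  define c where "c = ln l"
  have c0: "0 < c" using l1 by (simp add: c_def)
  have lc: "l ^ z = exp (c * real z)" for z :: nat
  proof -
    have "exp (c * real z) = exp (real z * c)" by (simp add: mult.commute)
    also have "\<dots> = exp c ^ z" by (rule exp_of_nat_mult)
    also have "\<dots> = l ^ z" using l1 by (simp add: c_def)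
    finally show ?thesis by simp
  qed
  define R where "R = 1 + (\<Sum>x\<in>UNIV. \<bar>r (fst x) (fst (snd x)) (snd (snd x))\<bar>)"
  have Rb: "\<bar>r s a s'\<bar> \<le> R" for s a s'
  proof -
    have "\<bar>r s a s'\<bar> \<le> (\<Sum>x\<in>UNIV. \<bar>r (fst x) (fst (snd x)) (snd (snd x))\<bar>)"
      using member_le_sum[of "(s, a, s')" UNIV "\<lambda>x. \<bar>r (fst x) (fst (snd x)) (snd (snd x))\<bar>"] by simp
    then show ?thesis by (simp add: R_def)
  qed
  have R0: "0 < R" using Rb[of e undefined e] by (simp add: R_def) (smt (verit) sum_nonneg abs_ge_zero)
  define rr where "rr = (\<lambda>s a s'. if s = e then 0 else r s a s')"
  define Y where "Y = (\<lambda>x :: ('s \<times> 'a) list \<times> 's. ret rr (fst x) (snd x))"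
  have gY: "g p r mu t pol \<beta> = ERM \<beta> (map_pmf Y (traj p mu pol (Suc t)))" for t pol \<beta>
    unfolding g_def
  proof (intro arg_cong[where f="ERM \<beta>"] map_pmf_cong[OF refl])
    fix x assume x: "x \<in> set_pmf (traj p mu pol (Suc t))"
    have "ret r (fst x) (snd x) = ret rr (fst x) (snd x)"
      unfolding rr_def by (rule ret_rr[of p e r, OF sink sink_rew x])
    then show "(\<lambda>(h, s). ret r h s) x = Y x" by (simp add: Y_def split_beta)
  qed
  have Yb: "\<bar>Y x\<bar> \<le> R * real (cnt e (fst x))" for x
    unfolding Y_def rr_def by (rule ret_bound[OF Rb])
  define B where "B = R * K0 / c"
  define C where "C = 16 * R\<^sup>2 * K0 / c\<^sup>2"
  define \<beta>0 where "\<beta>0 = c / (2 * R)"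
  have b0: "0 < \<beta>0" using c0 R0 by (simp add: \<beta>0_def)
  have fin: "finite (set_pmf (traj p mu pol n))" for pol n by (rule traj_fin)
  have E0: "g p r mu t pol 0 = measure_pmf.expectation (traj p mu pol (Suc t)) Y" for t pol
    by (simp add: gY ERM_map0)
  have part1: "\<bar>g p r mu t pol 0\<bar> \<le> B" for t pol
  proof -
    have pt: "\<bar>Y x\<bar> \<le> (R / c) * l ^ cnt e (fst x)" for x
    proof -
      have "c * real (cnt e (fst x)) \<le> exp (c * real (cnt e (fst x)))"
        using exp_ge_add_one_self[of "c * real (cnt e (fst x))"] by linarith
      then have "real (cnt e (fst x)) \<le> (1 / c) * l ^ cnt e (fst x)"
        using c0 by (simp add: lc field_simps)
      then have "R * real (cnt e (fst x)) \<le> R * ((1 / c) * l ^ cnt e (fst x))"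
        using R0 by (intro mult_left_mono) auto
      then show ?thesis using Yb[of x] by simp
    qed
    have "\<bar>g p r mu t pol 0\<bar> \<le> measure_pmf.expectation (traj p mu pol (Suc t)) (\<lambda>x. \<bar>Y x\<bar>)"
      unfolding E0 by (rule integral_abs_bound)
    also have "\<dots> \<le> measure_pmf.expectation (traj p mu pol (Suc t)) (\<lambda>x. (R / c) * l ^ cnt e (fst x))"
      by (intro integral_mono integrable_measure_pmf_finite fin pt)
    also have "\<dots> = (R / c) * measure_pmf.expectation (traj p mu pol (Suc t)) (\<lambda>x. l ^ cnt e (fst x))"
      by simp
    also have "\<dots> \<le> (R / c) * K0" by (rule mult_left_mono[OF mom]) (use R0 c0 in simp)
    finally show ?thesis by (simp add: B_def)
  qed
  have part2: "g p r mu t pol 0 - \<beta> * C \<le> g p r mu t pol \<beta> \<and> g p r mu t pol \<beta> \<le> g p r mu t pol 0"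
    if b: "0 < \<beta>" "\<beta> \<le> \<beta>0" for t pol \<beta>
  proof
    show "g p r mu t pol \<beta> \<le> g p r mu t pol 0"
      unfolding gY ERM_map0 using fin b by (intro ERM_le) auto
    have pt: "(Y x)\<^sup>2 * exp (\<beta> * \<bar>Y x\<bar>) \<le> (16 * R\<^sup>2 / c\<^sup>2) * l ^ cnt e (fst x)" for x
    proof -
      define z where "z = real (cnt e (fst x))"
      have z0: "0 \<le> z" by (simp add: z_def)
      have "(Y x)\<^sup>2 = \<bar>Y x\<bar>\<^sup>2" by simp
      also have "\<dots> \<le> (R * z)\<^sup>2" using Yb[of x] by (intro power_mono) (auto simp: z_def)
      finally have a1: "(Y x)\<^sup>2 \<le> (R * z)\<^sup>2" .
      have "\<beta> * \<bar>Y x\<bar> \<le> \<beta> * (R * z)" using Yb[of x] b by (intro mult_left_mono) (auto simp: z_def)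
      also have "\<dots> = (\<beta> * R) * z" by simp
      also have "\<dots> \<le> (c / 2) * z"
        using b R0 z0 by (intro mult_right_mono) (auto simp: \<beta>0_def field_simps)
      finally have a2: "exp (\<beta> * \<bar>Y x\<bar>) \<le> exp (c * z / 2)" by simp
      have "(Y x)\<^sup>2 * exp (\<beta> * \<bar>Y x\<bar>) \<le> (R * z)\<^sup>2 * exp (c * z / 2)"
        using a1 a2 by (intro mult_mono) auto
      also have "\<dots> = R\<^sup>2 / c\<^sup>2 * ((c * z)\<^sup>2 * exp (c * z / 2))"
        using c0 by (simp add: power_mult_distrib field_simps)
      also have "\<dots> \<le> R\<^sup>2 / c\<^sup>2 * ((16 * exp (c * z / 2)) * exp (c * z / 2))"
        using sq_le_exp[of "c * z"] c0 z0 by (intro mult_left_mono mult_right_mono) auto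
      also have "\<dots> = (16 * R\<^sup>2 / c\<^sup>2) * exp (c * z)"
        by (simp add: mult_exp_exp[symmetric] field_simps) (simp add: exp_add[symmetric])
      also have "\<dots> = (16 * R\<^sup>2 / c\<^sup>2) * l ^ cnt e (fst x)" by (simp add: lc z_def)
      finally show ?thesis .
    qed
    have "measure_pmf.expectation (traj p mu pol (Suc t)) (\<lambda>x. (Y x)\<^sup>2 * exp (\<beta> * \<bar>Y x\<bar>))
        \<le> measure_pmf.expectation (traj p mu pol (Suc t)) (\<lambda>x. (16 * R\<^sup>2 / c\<^sup>2) * l ^ cnt e (fst x))"
      by (intro integral_mono integrable_measure_pmf_finite fin pt)
    also have "\<dots> = (16 * R\<^sup>2 / c\<^sup>2) * measure_pmf.expectation (traj p mu pol (Suc t)) (\<lambda>x. l ^ cnt e (fst x))"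
      by simp
    also have "\<dots> \<le> (16 * R\<^sup>2 / c\<^sup>2) * K0" by (rule mult_left_mono[OF mom]) simp
    also have "\<dots> = C" by (simp add: C_def)
    finally have "measure_pmf.expectation (traj p mu pol (Suc t)) (\<lambda>x. (Y x)\<^sup>2 * exp (\<beta> * \<bar>Y x\<bar>)) \<le> C" .
    then show "g p r mu t pol 0 - \<beta> * C \<le> g p r mu t pol \<beta>"
      unfolding gY ERM_map0 using fin b by (intro ERM_ge) auto
  qed
  show ?thesis using b0 part1 part2 by blast
qed

end

theorem lemma10:
  fixes p :: "'s::finite \<Rightarrow> 'a::finite \<Rightarrow> 's pmf"
    and r :: "'s \<Rightarrow> 'a \<Rightarrow> 's \<Rightarrow> real"
    and mu :: "'s pmf"
    and e :: 's
    and d :: "'s \<Rightarrow> 'a"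
    and t :: nat
  assumes sink_trans: "\<And>a. p e a = return_pmf e"
    and sink_rew: "\<And>a. r e a e = 0"
    and mu_sink: "pmf mu e = 0"
    and mu_pos: "\<And>s. s \<noteq> e \<Longrightarrow> pmf mu s > 0"
    and transient: "\<And>d' s s'. s \<noteq> e \<Longrightarrow> s' \<noteq> e \<Longrightarrow>
        summable (\<lambda>n. measure_pmf.prob (traj p (return_pmf s) (sd_policy d') n)
                                         {x. snd x = s'})"
  shows "((\<lambda>\<beta>. g p r mu t (sd_policy d) \<beta>) \<longlongrightarrow> g p r mu t (sd_policy d) 0) (at_right 0) \<and>
         ((\<lambda>\<beta>. g_star p r mu t \<beta>) \<longlongrightarrow> g_star p r mu t 0) (at_right 0) \<and>
         ((\<lambda>\<beta>. g_inf p r mu (sd_policy d) \<beta>) \<longlongrightarrow> g_inf p r mu (sd_policy d) 0) (at_right 0) \<and>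
         ((\<lambda>\<beta>. g_star_inf p r mu \<beta>) \<longlongrightarrow> g_star_inf p r mu 0) (at_right 0)"
proof -
  obtain B C \<beta>0 where b0: "0 < \<beta>0" and Bd: "\<And>t pol. \<bar>g p r mu t pol 0\<bar> \<le> B"
    and H: "\<And>t pol \<beta>. 0 < \<beta> \<Longrightarrow> \<beta> \<le> \<beta>0 \<Longrightarrow>
        g p r mu t pol 0 - \<beta> * C \<le> g p r mu t pol \<beta> \<and> g p r mu t pol \<beta> \<le> g p r mu t pol 0"
    using unif[of p e r mu, OF sink_trans sink_rew transient] by blast
  have bdd0: "bdd_above (range (\<lambda>pol. g p r mu t pol 0))" for t
    using Bd by (intro bdd_aboveI2[of _ _ B]) (auto simp: abs_le_iff)
  have bddb: "bdd_above (range (\<lambda>pol. g p r mu t pol \<beta>))" if "0 < \<beta>" "\<beta> \<le> \<beta>0" for t \<beta>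
    using Bd H[OF that] by (intro bdd_aboveI2[of _ _ B]) (smt (verit))
  have gsB: "\<bar>g_star p r mu t 0\<bar> \<le> B" for t
  proof -
    have "g_star p r mu t 0 \<le> B" unfolding g_star_def
      by (rule cSUP_least) (use Bd in \<open>auto simp: abs_le_iff\<close>)
    moreover have "g p r mu t undefined 0 \<le> g_star p r mu t 0" unfolding g_star_def
      by (rule cSUP_upper[OF _ bdd0]) simp
    ultimately show ?thesis using Bd[of t undefined] by (simp add: abs_le_iff)
  qed
  have gsH: "g_star p r mu t 0 - \<beta> * C \<le> g_star p r mu t \<beta> \<and> g_star p r mu t \<beta> \<le> g_star p r mu t 0"
    if b: "0 < \<beta>" "\<beta> \<le> \<beta>0" for t \<beta>
  proof
    show "g_star p r mu t \<beta> \<le> g_star p r mu t 0" unfolding g_star_def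
    proof (rule cSUP_least)
      fix pol :: "('s, 'a) hr_policy"
      have "g p r mu t pol \<beta> \<le> g p r mu t pol 0" using H[OF b] by blast
      also have "\<dots> \<le> (SUP pol \<in> UNIV. g p r mu t pol 0)" by (rule cSUP_upper[OF _ bdd0]) simp
      finally show "g p r mu t pol \<beta> \<le> (SUP pol \<in> UNIV. g p r mu t pol 0)" .
    qed simp
    have "g_star p r mu t 0 \<le> g_star p r mu t \<beta> + \<beta> * C" unfolding g_star_def
    proof (rule cSUP_least)
      fix pol :: "('s, 'a) hr_policy"
      have "g p r mu t pol 0 \<le> g p r mu t pol \<beta> + \<beta> * C" using H[OF b, of t pol] by linarith
      also have "\<dots> \<le> (SUP pol \<in> UNIV. g p r mu t pol \<beta>) + \<beta> * C"
        by (intro add_right_mono cSUP_upper[OF _ bddb[OF b]]) simp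
      finally show "g p r mu t pol 0 \<le> (SUP pol \<in> UNIV. g p r mu t pol \<beta>) + \<beta> * C" .
    qed simp
    then show "g_star p r mu t 0 - \<beta> * C \<le> g_star p r mu t \<beta>" by simp
  qed
  have P1: "((\<lambda>\<beta>. g p r mu t (sd_policy d) \<beta>) \<longlongrightarrow> g p r mu t (sd_policy d) 0) (at_right 0)"
    by (rule real_cont[OF b0, where C=C]) (rule H)
  have P2: "((\<lambda>\<beta>. g_star p r mu t \<beta>) \<longlongrightarrow> g_star p r mu t 0) (at_right 0)"
    by (rule real_cont[OF b0, where C=C]) (rule gsH)
  have P3: "((\<lambda>\<beta>. g_inf p r mu (sd_policy d) \<beta>) \<longlongrightarrow> g_inf p r mu (sd_policy d) 0) (at_right 0)"
    unfolding g_inf_def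
    by (rule liminf_cont[where G="\<lambda>\<beta> t. g p r mu t (sd_policy d) \<beta>", OF b0 Bd H])
  have P4: "((\<lambda>\<beta>. g_star_inf p r mu \<beta>) \<longlongrightarrow> g_star_inf p r mu 0) (at_right 0)"
    unfolding g_star_inf_def
    by (rule liminf_cont[where G="\<lambda>\<beta> t. g_star p r mu t \<beta>", OF b0 gsB gsH])
  show ?thesis using P1 P2 P3 P4 by blast
qed

end
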